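(* Let $\mathcal{F}$ be the class of planar graphs of maximum degree at most $4$, and let $G \in \mathcal{F}$ be a graph with $\chi_2(G) > 12$ that minimizes the pair $(|V(G)|, |E(G)|)$ (lexicographically) among all graphs of $\mathcal{F}$ with $\chi_2 > 12$. Then $G$ is $2$-connected.
   Context: All graphs are finite, without loops or parallel edges. A distance-$2$ coloring of a graph is an assignment of colors to its vertices such that any two distinct vertices at distance at most $2$ receive different colors; $\chi_2(G)$ is the minimum number of colors in a distance-$2$ coloring of $G$. *)

theory Defs
  imports "HOL-Analysis.Analysis"
begin

definition simple_graph :: "'v set \<Rightarrow> 'v set set \<Rightarrow> bool" where
  "simple_graph V E \<longleftrightarrow> finite V \<and> (\<forall>e\<in>E. \<exists>u v. e = {u, v} \<and> u \<noteq> v \<and> u \<in> V \<and> v \<in> V)"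

definition adj :: "'v set set \<Rightarrow> 'v \<Rightarrow> 'v \<Rightarrow> bool" where
  "adj E u v \<longleftrightarrow> {u, v} \<in> E \<and> u \<noteq> v"

definition degree :: "'v set set \<Rightarrow> 'v \<Rightarrow> nat" where
  "degree E v = card {e \<in> E. v \<in> e}"

definition max_degree_le :: "'v set \<Rightarrow> 'v set set \<Rightarrow> nat \<Rightarrow> bool" where
  "max_degree_le V E d \<longleftrightarrow> (\<forall>v\<in>V. degree E v \<le> d)"

definition dist_le2 :: "'v set \<Rightarrow> 'v set set \<Rightarrow> 'v \<Rightarrow> 'v \<Rightarrow> bool" where
  "dist_le2 V E u v \<longleftrightarrow> adj E u v \<or> (\<exists>w\<in>V. adj E u w \<and> adj E w v)"

definition dist2_coloring :: "'v set \<Rightarrow> 'v set set \<Rightarrow> nat \<Rightarrow> ('v \<Rightarrow> nat) \<Rightarrow> bool" where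
  "dist2_coloring V E k c \<longleftrightarrow> (\<forall>v\<in>V. c v < k) \<and>
     (\<forall>u\<in>V. \<forall>v\<in>V. u \<noteq> v \<and> dist_le2 V E u v \<longrightarrow> c u \<noteq> c v)"

definition chi2 :: "'v set \<Rightarrow> 'v set set \<Rightarrow> nat" where
  "chi2 V E = (LEAST k. \<exists>c. dist2_coloring V E k c)"

definition planar :: "'v set \<Rightarrow> 'v set set \<Rightarrow> bool" where
  "planar V E \<longleftrightarrow> (\<exists>(p :: 'v \<Rightarrow> complex) (\<gamma> :: 'v set \<Rightarrow> real \<Rightarrow> complex).
     inj_on p V \<and>
     (\<forall>e\<in>E. arc (\<gamma> e) \<and> {pathstart (\<gamma> e), pathfinish (\<gamma> e)} = p ` e \<and>
             path_image (\<gamma> e) \<inter> p ` V = p ` e) \<and>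
     (\<forall>e\<in>E. \<forall>e'\<in>E. e \<noteq> e' \<longrightarrow> path_image (\<gamma> e) \<inter> path_image (\<gamma> e') \<subseteq> p ` (e \<inter> e')))"

definition connected_graph :: "'v set \<Rightarrow> 'v set set \<Rightarrow> bool" where
  "connected_graph V E \<longleftrightarrow> V \<noteq> {} \<and>
     (\<forall>u\<in>V. \<forall>v\<in>V. (\<lambda>x y. x \<in> V \<and> y \<in> V \<and> adj E x y)\<^sup>*\<^sup>* u v)"

definition del_vertex_edges :: "'v set set \<Rightarrow> 'v \<Rightarrow> 'v set set" where
  "del_vertex_edges E x = {e \<in> E. x \<notin> e}"

definition two_connected :: "'v set \<Rightarrow> 'v set set \<Rightarrow> bool" where
  "two_connected V E \<longleftrightarrow> card V \<ge> 3 \<and> connected_graph V E \<and>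
     (\<forall>x\<in>V. connected_graph (V - {x}) (del_vertex_edges E x))"

definition in_F :: "'v set \<Rightarrow> 'v set set \<Rightarrow> bool" where
  "in_F V E \<longleftrightarrow> simple_graph V E \<and> planar V E \<and> max_degree_le V E 4"

end

theory Submission imports Defs begin

definition ind :: "'v set set \<Rightarrow> 'v set \<Rightarrow> 'v set set" where
  "ind E A = {e \<in> E. e \<subseteq> A}"

lemma finite_E: "simple_graph V E \<Longrightarrow> finite E"
proof -
  assume a: "simple_graph V E"
  then have "E \<subseteq> Pow V" unfolding simple_graph_def by auto
  moreover have "finite V" using a unfolding simple_graph_def by auto
  ultimately show ?thesis by (meson finite_Pow_iff finite_subset)
qed

lemma adj_sym: "adj E u v \<Longrightarrow> adj E v u"
  unfolding adj_def by (auto simp: insert_commute)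

lemma coloring_exists: "finite V \<Longrightarrow> \<exists>c. dist2_coloring V E (card V) c"
proof -
  assume "finite V"
  then obtain h where h: "bij_betw h V {0..<card V}" using ex_bij_betw_finite_nat by blast
  then have "dist2_coloring V E (card V) h"
    unfolding dist2_coloring_def bij_betw_def inj_on_def by auto
  then show ?thesis by blast
qed

lemma chi2_le: "dist2_coloring V E k c \<Longrightarrow> chi2 V E \<le> k"
  unfolding chi2_def by (rule Least_le) blast

lemma chi2_col: "\<exists>c. dist2_coloring V E k c \<Longrightarrow> \<exists>c. dist2_coloring V E (chi2 V E) c"
proof -
  assume "\<exists>c. dist2_coloring V E k c"
  then have "\<exists>k c. dist2_coloring V E k c" by blast
  then show ?thesis unfolding chi2_def by (rule LeastI_ex)
qed

lemma col_mono: "dist2_coloring V E k c \<Longrightarrow> k \<le> k' \<Longrightarrow> dist2_coloring V E k' c"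
  unfolding dist2_coloring_def by auto

lemma induced_in_F:
  assumes "in_F V E" "A \<subseteq> V"
  shows "in_F A (ind E A)"
proof -
  have sg: "simple_graph V E" and pl: "planar V E" and md: "max_degree_le V E 4"
    using assms(1) unfolding in_F_def by auto
  have fE: "finite E" using finite_E sg by blast
  have "simple_graph A (ind E A)"
    unfolding simple_graph_def
  proof (intro conjI ballI)
    show "finite A" using sg assms(2) unfolding simple_graph_def by (auto intro: finite_subset)
  next
    fix e assume "e \<in> ind E A"
    then have e: "e \<in> E" "e \<subseteq> A" unfolding ind_def by auto
    then obtain u v where "e = {u, v}" "u \<noteq> v" using sg unfolding simple_graph_def by blast
    then show "\<exists>u v. e = {u, v} \<and> u \<noteq> v \<and> u \<in> A \<and> v \<in> A" using e by auto
  qed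
  moreover have "planar A (ind E A)"
  proof -
    obtain p :: "'a \<Rightarrow> complex" and \<gamma> where
      1: "inj_on p V" and
      2: "\<forall>e\<in>E. arc (\<gamma> e) \<and> {pathstart (\<gamma> e), pathfinish (\<gamma> e)} = p ` e \<and>
             path_image (\<gamma> e) \<inter> p ` V = p ` e" and
      3: "\<forall>e\<in>E. \<forall>e'\<in>E. e \<noteq> e' \<longrightarrow> path_image (\<gamma> e) \<inter> path_image (\<gamma> e') \<subseteq> p ` (e \<inter> e')"
      using pl unfolding planar_def by blast
    have "inj_on p A" using 1 assms(2) inj_on_subset by blast
    moreover have "\<forall>e\<in>ind E A. arc (\<gamma> e) \<and> {pathstart (\<gamma> e), pathfinish (\<gamma> e)} = p ` e \<and>
             path_image (\<gamma> e) \<inter> p ` A = p ` e"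
    proof
      fix e assume e: "e \<in> ind E A"
      then have eE: "e \<in> E" and eA: "e \<subseteq> A" unfolding ind_def by auto
      have "path_image (\<gamma> e) \<inter> p ` A = path_image (\<gamma> e) \<inter> p ` V \<inter> p ` A"
        using assms(2) by blast
      also have "\<dots> = p ` e" using 2 eE eA by blast
      finally show "arc (\<gamma> e) \<and> {pathstart (\<gamma> e), pathfinish (\<gamma> e)} = p ` e \<and>
             path_image (\<gamma> e) \<inter> p ` A = p ` e" using 2 eE by blast
    qed
    moreover have "\<forall>e\<in>ind E A. \<forall>e'\<in>ind E A. e \<noteq> e' \<longrightarrow> path_image (\<gamma> e) \<inter> path_image (\<gamma> e') \<subseteq> p ` (e \<inter> e')"
      using 3 unfolding ind_def by blast
    ultimately show ?thesis unfolding planar_def by blast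
  qed
  moreover have "max_degree_le A (ind E A) 4"
    unfolding max_degree_le_def degree_def
  proof
    fix v assume v: "v \<in> A"
    have "card {e \<in> ind E A. v \<in> e} \<le> card {e \<in> E. v \<in> e}"
      by (rule card_mono) (use fE in \<open>auto simp: ind_def\<close>)
    also have "\<dots> \<le> 4" using md v assms(2) unfolding max_degree_le_def degree_def by auto
    finally show "card {e \<in> ind E A. v \<in> e} \<le> 4" .
  qed
  ultimately show ?thesis unfolding in_F_def by blast
qed

lemma perm_exists:
  fixes K S T :: "nat set"
  assumes fK: "finite K" and aK: "a \<in> K" and bK: "b \<in> K" and SK: "S \<subseteq> K" and aS: "a \<notin> S"
    and TK: "T \<subseteq> K" and bT: "b \<notin> T" and cST: "card S \<le> card T"
  shows "\<exists>\<pi>. inj_on \<pi> K \<and> \<pi> ` K \<subseteq> K \<and> \<pi> a = b \<and> \<pi> ` S \<subseteq> T"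
proof -
  have fS: "finite S" using fK SK finite_subset by blast
  have fT: "finite T" using fK TK finite_subset by blast
  obtain g where g1: "g ` S \<subseteq> T" and g2: "inj_on g S" using card_le_inj[OF fS fT cST] by blast
  define g' where "g' = g(a := b)"
  define S' where "S' = insert a S"
  have g'S: "g' ` S' = insert b (g ` S)" unfolding g'_def S'_def using aS by auto
  have ig': "inj_on g' S'" unfolding g'_def S'_def using g1 g2 aS bT
    by (auto simp: inj_on_def)
  have S'K: "S' \<subseteq> K" unfolding S'_def using aK SK by auto
  have gK: "g' ` S' \<subseteq> K" using g'S g1 TK bK by auto
  have cc: "card (K - S') = card (K - g' ` S')"
    using card_image[OF ig'] S'K gK fK by (simp add: card_Diff_subset finite_subset)
  obtain h where h: "bij_betw h (K - S') (K - g' ` S')"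
    using finite_same_card_bij[OF _ _ cc] fK by blast
  define \<pi> where "\<pi> = (\<lambda>z. if z \<in> S' then g' z else h z)"
  have "inj_on \<pi> K"
    unfolding inj_on_def \<pi>_def
  proof (intro ballI impI)
    fix x y assume x: "x \<in> K" and y: "y \<in> K" and e: "(if x \<in> S' then g' x else h x) = (if y \<in> S' then g' y else h y)"
    show "x = y"
    proof (cases "x \<in> S'"; cases "y \<in> S'")
      assume "x \<in> S'" "y \<in> S'" then show ?thesis using e ig' by (auto simp: inj_on_def)
    next
      assume "x \<notin> S'" "y \<notin> S'" then show ?thesis using e h x y by (auto simp: bij_betw_def inj_on_def)
    next
      assume "x \<in> S'" "y \<notin> S'" then show ?thesis using e h y
        by (auto simp: bij_betw_def)
    next
      assume "x \<notin> S'" "y \<in> S'" then show ?thesis using e h x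
        by (auto simp: bij_betw_def)
    qed
  qed
  moreover have "\<pi> ` K \<subseteq> K" unfolding \<pi>_def using gK h by (auto simp: bij_betw_def)
  moreover have "\<pi> a = b" unfolding \<pi>_def g'_def S'_def by auto
  moreover have "\<pi> ` S \<subseteq> T" unfolding \<pi>_def g'_def S'_def using g1 aS by auto
  ultimately show ?thesis by blast
qed

lemma dist_sym: "dist_le2 V E u v \<Longrightarrow> dist_le2 V E v u"
  unfolding dist_le2_def adj_def by (auto simp: insert_commute)

lemma adj_ind: "adj E u v \<Longrightarrow> u \<in> A \<Longrightarrow> v \<in> A \<Longrightarrow> adj (ind E A) u v"
  unfolding adj_def ind_def by auto

lemma local_dist:
  assumes uA: "u \<in> A" and vA: "v \<in> A" and uv: "u \<noteq> v" and xA: "x \<in> A" and d: "dist_le2 V E u v"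
    and ne: "\<And>p q. p \<in> A - {x} \<Longrightarrow> q \<in> V - A \<Longrightarrow> \<not> adj E p q"
  shows "dist_le2 A (ind E A) u v"
proof (cases "adj E u v")
  case True
  have "adj (ind E A) u v" using adj_ind[OF True uA vA] .
  then show ?thesis unfolding dist_le2_def by (rule disjI1)
next
  case False
  then obtain w where w: "w \<in> V" "adj E u w" "adj E w v" using d unfolding dist_le2_def by blast
  show ?thesis
  proof (cases "w \<in> A")
    case True
    have "adj (ind E A) u w" using adj_ind[OF w(2) uA True] .
    moreover have "adj (ind E A) w v" using adj_ind[OF w(3) True vA] .
    ultimately show ?thesis using True unfolding dist_le2_def by blast
  next
    case False
    then have wV: "w \<in> V - A" using w(1) by simp
    show ?thesis
    proof (cases "u = x")
      case True
      then have "v \<in> A - {x}" using vA uv by simp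
      then have "\<not> adj E v w" using ne wV by blast
      then show ?thesis using adj_sym[OF w(3)] by blast
    next
      case False
      then have "u \<in> A - {x}" using uA by simp
      then have "\<not> adj E u w" using ne wV by blast
      then show ?thesis using w(2) by blast
    qed
  qed
qed

lemma glue:
  assumes sg: "simple_graph V E" and md: "max_degree_le V E 4"
    and xA: "x \<in> A" and xB: "x \<in> B" and V: "V = A \<union> B" and AB: "A \<inter> B = {x}"
    and ne: "\<And>u v. u \<in> A - {x} \<Longrightarrow> v \<in> B - {x} \<Longrightarrow> \<not> adj E u v"
    and c1: "dist2_coloring A (ind E A) 12 c1" and c2: "dist2_coloring B (ind E B) 12 c2"
  shows "\<exists>c. dist2_coloring V E 12 c"
proof -
  have fV: "finite V" using sg unfolding simple_graph_def by auto
  have fE: "finite E" using finite_E sg by blast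
  define N1 where "N1 = {v \<in> A - {x}. adj E x v}"
  define N2 where "N2 = {v \<in> B - {x}. adj E x v}"
  define Nb where "Nb = {v \<in> V. adj E x v}"
  have fN1: "finite N1" by (rule finite_subset[OF _ fV]) (auto simp: N1_def V)
  have fN2: "finite N2" by (rule finite_subset[OF _ fV]) (auto simp: N2_def V)
  have "card Nb \<le> card {e \<in> E. x \<in> e}"
  proof (rule card_inj_on_le[where f="\<lambda>v. {x, v}"])
    show "inj_on (\<lambda>v. {x, v}) Nb" unfolding inj_on_def Nb_def adj_def
      by (auto simp: doubleton_eq_iff)
    show "(\<lambda>v. {x, v}) ` Nb \<subseteq> {e \<in> E. x \<in> e}" unfolding Nb_def adj_def by auto
    show "finite {e \<in> E. x \<in> e}" using fE by auto
  qed
  also have "\<dots> \<le> 4" using md xA V unfolding max_degree_le_def degree_def by auto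
  finally have cNb: "card Nb \<le> 4" .
  have "card N1 + card N2 = card (N1 \<union> N2)"
    by (rule card_Un_disjoint[symmetric]) (use fN1 fN2 AB in \<open>auto simp: N1_def N2_def\<close>)
  also have "\<dots> \<le> card Nb"
    by (rule card_mono) (auto simp: N1_def N2_def Nb_def V intro: finite_subset[OF _ fV])
  finally have cN: "card N1 + card N2 \<le> 4" using cNb by linarith
  define K :: "nat set" where "K = {0..<12}"
  define S where "S = c2 ` N2"
  define T where "T = K - insert (c1 x) (c1 ` N1)"
  have c1b: "\<And>v. v \<in> A \<Longrightarrow> c1 v \<in> K" using c1 unfolding dist2_coloring_def K_def by auto
  have c2b: "\<And>v. v \<in> B \<Longrightarrow> c2 v \<in> K" using c2 unfolding dist2_coloring_def K_def by auto
  have c1d: "\<And>u v. u \<in> A \<Longrightarrow> v \<in> A \<Longrightarrow> u \<noteq> v \<Longrightarrow> dist_le2 A (ind E A) u v \<Longrightarrow> c1 u \<noteq> c1 v"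
    using c1 unfolding dist2_coloring_def by blast
  have c2d: "\<And>u v. u \<in> B \<Longrightarrow> v \<in> B \<Longrightarrow> u \<noteq> v \<Longrightarrow> dist_le2 B (ind E B) u v \<Longrightarrow> c2 u \<noteq> c2 v"
    using c2 unfolding dist2_coloring_def by blast
  have aS: "c2 x \<notin> S"
  proof
    assume "c2 x \<in> S"
    then obtain v where v: "v \<in> N2" "c2 v = c2 x" unfolding S_def by auto
    then have "v \<in> B" "v \<noteq> x" "adj E x v" unfolding N2_def by auto
    then have "adj (ind E B) x v" using xB by (intro adj_ind)
    then have "dist_le2 B (ind E B) x v" unfolding dist_le2_def by (rule disjI1)
    then have "c2 x \<noteq> c2 v" using c2d[of x v] \<open>v \<in> B\<close> \<open>v \<noteq> x\<close> xB by metis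
    then show False using v(2) by simp
  qed
  have cS: "card S \<le> card N2" unfolding S_def using card_image_le fN2 by blast
  have "card (insert (c1 x) (c1 ` N1)) \<le> Suc (card (c1 ` N1))"
    using fN1 by (simp add: card_insert_if)
  moreover have "card (c1 ` N1) \<le> card N1" using card_image_le fN1 by blast
  moreover have "card K - card (insert (c1 x) (c1 ` N1)) \<le> card T"
    unfolding T_def by (rule diff_card_le_card_Diff) (use fN1 in auto)
  ultimately have cT: "12 - Suc (card N1) \<le> card T" unfolding K_def by simp
  have SK: "S \<subseteq> K" unfolding S_def N2_def using c2b by auto
  obtain \<pi> where pi: "inj_on \<pi> K" "\<pi> ` K \<subseteq> K" "\<pi> (c2 x) = c1 x" "\<pi> ` S \<subseteq> T"
  proof -
    have "finite K" unfolding K_def by simp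
    have "c2 x \<in> K" using c2b xB by blast
    have "c1 x \<in> K" using c1b xA by blast
    have "T \<subseteq> K" "c1 x \<notin> T" unfolding T_def by blast+
    note * = \<open>finite K\<close> \<open>c2 x \<in> K\<close> \<open>c1 x \<in> K\<close> this
    moreover have "card S \<le> card T" using cS cT cN by linarith
    ultimately have "\<exists>\<pi>. inj_on \<pi> K \<and> \<pi> ` K \<subseteq> K \<and> \<pi> (c2 x) = c1 x \<and> \<pi> ` S \<subseteq> T"
      using SK aS by (intro perm_exists) auto
    then show ?thesis using that by blast
  qed
  define c where "c = (\<lambda>v. if v \<in> A then c1 v else \<pi> (c2 v))"
  have cA: "\<And>v. v \<in> A \<Longrightarrow> c v = c1 v" unfolding c_def by auto
  have cB: "c v = \<pi> (c2 v)" if "v \<in> B" for v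
  proof (cases "v \<in> A")
    case True
    then have "v = x" using AB that by blast
    then show ?thesis unfolding c_def using pi(3) xA by simp
  qed (simp add: c_def)
  have cK: "c v \<in> K" if "v \<in> V" for v
  proof (cases "v \<in> A")
    case True then show ?thesis using cA c1b by simp
  next
    case False
    then have "v \<in> B" using that V by blast
    then show ?thesis using cB c2b pi(2) by blast
  qed
  have cross: "c u \<noteq> c v" if u: "u \<in> A - {x}" and v: "v \<in> B - {x}" and d: "dist_le2 V E u v" for u v
  proof -
    have "\<not> adj E u v" using ne u v by blast
    then obtain w where w: "w \<in> V" "adj E u w" "adj E w v" using d unfolding dist_le2_def by blast
    have "w = x"
    proof (rule ccontr)
      assume "w \<noteq> x"
      then have "w \<in> A - {x} \<or> w \<in> B - {x}" using w V by auto
      then show False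
      proof
        assume "w \<in> A - {x}"
        then have "\<not> adj E w v" using ne v by blast
        then show False using w(3) by blast
      next
        assume "w \<in> B - {x}"
        then have "\<not> adj E u w" using ne u by blast
        then show False using w(2) by blast
      qed
    qed
    have "adj E x u" using adj_sym[OF w(2)] \<open>w = x\<close> by simp
    then have "u \<in> N1" using u unfolding N1_def by blast
    have "v \<in> N2" using v w(3) \<open>w = x\<close> unfolding N2_def by blast
    note \<open>u \<in> N1\<close> this
    then have "c u \<in> c1 ` N1" "c v \<in> T" using cA cB u v pi(4) unfolding S_def by auto
    then show ?thesis unfolding T_def by auto
  qed
  have "dist2_coloring V E 12 c"
    unfolding dist2_coloring_def
  proof (intro conjI ballI impI)
    fix v assume "v \<in> V" then show "c v < 12" using cK unfolding K_def by auto
  next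
    fix u v assume u: "u \<in> V" and v: "v \<in> V" and uv: "u \<noteq> v \<and> dist_le2 V E u v"
    show "c u \<noteq> c v"
    proof (cases "u \<in> A \<and> v \<in> A")
      case True
      have "\<not> adj E p q" if "p \<in> A - {x}" "q \<in> V - A" for p q
      proof -
        have "q \<in> B - {x}" using that V xA by blast
        then show ?thesis using ne that(1) by blast
      qed
      then have "dist_le2 A (ind E A) u v"
        using local_dist[of u A v x V E] uv xA True by blast
      then have "c1 u \<noteq> c1 v" using c1d[of u v] True uv by blast
      then show ?thesis using cA True by simp
    next
      case nA: False
      show ?thesis
      proof (cases "u \<in> B \<and> v \<in> B")
        case True
        have "\<not> adj E p q" if "p \<in> B - {x}" "q \<in> V - B" for p q
        proof
          assume "adj E p q"
          then have "adj E q p" by (rule adj_sym)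
          moreover have "q \<in> A - {x}" using that V xB by blast
          ultimately show False using ne that(1) by blast
        qed
        then have "dist_le2 B (ind E B) u v"
          using local_dist[of u B v x V E] uv xB True by blast
        then have "c2 u \<noteq> c2 v" using c2d[of u v] True uv by blast
        moreover have "c2 u \<in> K" "c2 v \<in> K" using c2b True by auto
        ultimately have "\<pi> (c2 u) \<noteq> \<pi> (c2 v)" by (rule inj_on_contraD[OF pi(1)])
        then show ?thesis using cB True by simp
      next
        case False
        then have "(u \<in> A - {x} \<and> v \<in> B - {x}) \<or> (v \<in> A - {x} \<and> u \<in> B - {x})"
          using nA u v V AB by blast
        then show ?thesis
        proof
          assume "u \<in> A - {x} \<and> v \<in> B - {x}"
          then show ?thesis using cross[of u v] uv by blast
        next
          assume "v \<in> A - {x} \<and> u \<in> B - {x}"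
          moreover have "dist_le2 V E v u" using uv dist_sym[of V E u v] by blast
          ultimately have "c v \<noteq> c u" using cross[of v u] by blast
          then show ?thesis by simp
        qed
      qed
    qed
  qed
  then show ?thesis by blast
qed

lemma reach_in:
  assumes "(\<lambda>a b. a \<in> W \<and> b \<in> W \<and> P a b)\<^sup>*\<^sup>* u w" "u \<in> W"
  shows "w \<in> W"
  using assms by (induction rule: rtranclp_induct) auto

theorem lemma1:
  fixes V :: "'v set" and E :: "'v set set"
  assumes "in_F V E"
    and "chi2 V E > 12"
    and "\<And>(V' :: 'v set) (E' :: 'v set set). in_F V' E' \<Longrightarrow> chi2 V' E' > 12 \<Longrightarrow>
           card V < card V' \<or> (card V = card V' \<and> card E \<le> card E')"
  shows "two_connected V E"
proof -
  have sg: "simple_graph V E" and md: "max_degree_le V E 4"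
    using assms(1) unfolding in_F_def by auto
  have fV: "finite V" using sg unfolding simple_graph_def by auto
  have sub: "\<exists>c. dist2_coloring A (ind E A) 12 c" if AV: "A \<subseteq> V" and cA: "card A < card V" for A
  proof -
    have F: "in_F A (ind E A)" using induced_in_F[OF assms(1) AV] .
    have le: "chi2 A (ind E A) \<le> 12"
    proof (rule ccontr)
      assume "\<not> chi2 A (ind E A) \<le> 12"
      then have "chi2 A (ind E A) > 12" by simp
      then have "card V < card A \<or> (card V = card A \<and> card E \<le> card (ind E A))"
        using assms(3)[OF F] by blast
      then show False using cA by linarith
    qed
    have "finite A" using fV AV finite_subset by blast
    then have "\<exists>c. dist2_coloring A (ind E A) (card A) c" by (rule coloring_exists)
    then obtain c where "dist2_coloring A (ind E A) (chi2 A (ind E A)) c" using chi2_col by blast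
    then have "dist2_coloring A (ind E A) 12 c" using col_mono le by blast
    then show ?thesis by blast
  qed
  have sep: False if xA: "x \<in> A" and xB: "x \<in> B" and VAB: "V = A \<union> B" and AB: "A \<inter> B = {x}"
    and ne: "\<And>u v. u \<in> A - {x} \<Longrightarrow> v \<in> B - {x} \<Longrightarrow> \<not> adj E u v"
    and cA: "card A < card V" and cB: "card B < card V" for x A B
  proof -
    obtain c1 where c1: "dist2_coloring A (ind E A) 12 c1" using sub[of A] VAB cA by blast
    obtain c2 where c2: "dist2_coloring B (ind E B) 12 c2" using sub[of B] VAB cB by blast
    obtain c where "dist2_coloring V E 12 c" using glue[OF sg md xA xB VAB AB ne c1 c2] by blast
    then have "chi2 V E \<le> 12" by (rule chi2_le)
    then show False using assms(2) by simp
  qed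
  obtain c0 where "dist2_coloring V E (card V) c0" using coloring_exists[OF fV] by blast
  then have "chi2 V E \<le> card V" by (rule chi2_le)
  then have cV: "card V \<ge> 13" using assms(2) by simp
  have conn: "connected_graph V E"
    unfolding connected_graph_def
  proof (intro conjI ballI)
    show "V \<noteq> {}" using cV by auto
  next
    fix u v assume u: "u \<in> V" and v: "v \<in> V"
    define R where "R = (\<lambda>a b. a \<in> V \<and> b \<in> V \<and> adj E a b)"
    show "(\<lambda>a b. a \<in> V \<and> b \<in> V \<and> adj E a b)\<^sup>*\<^sup>* u v"
    proof (rule ccontr)
      assume nuv: "\<not> (\<lambda>a b. a \<in> V \<and> b \<in> V \<and> adj E a b)\<^sup>*\<^sup>* u v"
      define C where "C = {w. R\<^sup>*\<^sup>* u w}"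
      have CV: "C \<subseteq> V" unfolding C_def R_def using reach_in[of V] u by blast
      have clo: "w' \<in> C" if "w \<in> C" "w' \<in> V" "adj E w w'" for w w'
      proof -
        have "R w w'" unfolding R_def using that CV by blast
        then show ?thesis using that(1) unfolding C_def by (simp add: rtranclp.rtrancl_into_rtrancl)
      qed
      have uC: "u \<in> C" unfolding C_def by simp
      have vC: "v \<notin> C" using nuv unfolding C_def R_def by simp
      show False
      proof (cases "\<exists>u'\<in>C. u' \<noteq> u")
        case True
        then obtain u' where u': "u' \<in> C" "u' \<noteq> u" by blast
        show False
        proof (rule sep[of u C "(V - C) \<union> {u}"])
          show "u \<in> C" by (rule uC)
          show "u \<in> (V - C) \<union> {u}" by simp
          show "V = C \<union> ((V - C) \<union> {u})" using CV u by blast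
          show "C \<inter> ((V - C) \<union> {u}) = {u}" using uC by blast
          show "\<not> adj E p q" if "p \<in> C - {u}" "q \<in> (V - C) \<union> {u} - {u}" for p q
            using clo[of p q] that by blast
          have "C \<subset> V" using CV vC v by blast
          then show "card C < card V" using fV by (rule psubset_card_mono[rotated])
          have "(V - C) \<union> {u} \<subset> V" using u u' CV by blast
          then show "card ((V - C) \<union> {u}) < card V" using fV by (rule psubset_card_mono[rotated])
        qed
      next
        case False
        then have Cu: "C = {u}" using uC by blast
        have vu: "v \<noteq> u" using vC uC by blast
        show False
        proof (rule sep[of v "V - {u}" "{u, v}"])
          show "v \<in> V - {u}" using v vu by simp
          show "v \<in> {u, v}" by simp
          show "V = (V - {u}) \<union> {u, v}" using u v by blast
          show "(V - {u}) \<inter> {u, v} = {v}" using vu v by blast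
          show "\<not> adj E p q" if "p \<in> V - {u} - {v}" "q \<in> {u, v} - {v}" for p q
          proof
            assume "adj E p q"
            moreover have "q = u" using that by blast
            ultimately have "adj E u p" using adj_sym[of E p q] by simp
            then have "p \<in> C" using clo[of u p] uC that by blast
            then show False using Cu that by blast
          qed
          show "card (V - {u}) < card V" using u fV by (rule card_Diff1_less[rotated])
          show "card {u, v} < card V" using cV by (simp add: card_insert_if)
        qed
      qed
    qed
  qed
  have cut: "connected_graph (V - {x}) (del_vertex_edges E x)" if xV: "x \<in> V" for x
    unfolding connected_graph_def
  proof (intro conjI ballI)
    show "V - {x} \<noteq> {}"
    proof
      assume "V - {x} = {}"
      then have "V \<subseteq> {x}" by blast
      then have "card V \<le> card {x}" by (rule card_mono[rotated]) simp
      then show False using cV by simp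
    qed
  next
    fix u v assume u: "u \<in> V - {x}" and v: "v \<in> V - {x}"
    define R where "R = (\<lambda>a b. a \<in> V - {x} \<and> b \<in> V - {x} \<and> adj (del_vertex_edges E x) a b)"
    show "(\<lambda>a b. a \<in> V - {x} \<and> b \<in> V - {x} \<and> adj (del_vertex_edges E x) a b)\<^sup>*\<^sup>* u v"
    proof (rule ccontr)
      assume nuv: "\<not> (\<lambda>a b. a \<in> V - {x} \<and> b \<in> V - {x} \<and> adj (del_vertex_edges E x) a b)\<^sup>*\<^sup>* u v"
      define C where "C = {w. R\<^sup>*\<^sup>* u w}"
      have CV: "C \<subseteq> V - {x}" unfolding C_def R_def using reach_in[of "V - {x}"] u by blast
      have clo: "w' \<in> C" if "w \<in> C" "w' \<in> V - {x}" "adj E w w'" for w w'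
      proof -
        have "adj (del_vertex_edges E x) w w'"
          using that CV unfolding adj_def del_vertex_edges_def by blast
        then have "R w w'" unfolding R_def using that CV by blast
        then show ?thesis using that(1) unfolding C_def by (simp add: rtranclp.rtrancl_into_rtrancl)
      qed
      have uC: "u \<in> C" unfolding C_def by simp
      have vC: "v \<notin> C" using nuv unfolding C_def R_def by simp
      show False
      proof (rule sep[of x "C \<union> {x}" "(V - {x} - C) \<union> {x}"])
        show "x \<in> C \<union> {x}" by simp
        show "x \<in> (V - {x} - C) \<union> {x}" by simp
        show "V = (C \<union> {x}) \<union> ((V - {x} - C) \<union> {x})" using CV xV by blast
        show "(C \<union> {x}) \<inter> ((V - {x} - C) \<union> {x}) = {x}" by blast
        show "\<not> adj E p q" if "p \<in> C \<union> {x} - {x}" "q \<in> (V - {x} - C) \<union> {x} - {x}" for p q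
          using clo[of p q] that by blast
        have "C \<union> {x} \<subset> V" using CV xV v vC by blast
        then show "card (C \<union> {x}) < card V" using fV by (rule psubset_card_mono[rotated])
        have "(V - {x} - C) \<union> {x} \<subset> V" using xV u uC by blast
        then show "card ((V - {x} - C) \<union> {x}) < card V" using fV by (rule psubset_card_mono[rotated])
      qed
    qed
  qed
  show ?thesis unfolding two_connected_def using cV conn cut by auto
qed

end
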